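(* Let $P\subset\mathbb{R}^3$ be a minimal Fano polytope which is an octahedron. Then, up to the action of $GL(3,\mathbb{Z})$, $P$ is the convex hull of either $\{\pm(1,0,0),\pm(0,1,0),\pm(0,0,1)\}$ or $\{\pm(1,0,0),\pm(0,1,0),\pm(1,1,2)\}$.
   Context: A Fano polytope is a convex polytope $P\subset\mathbb{R}^3$ with vertices in $\mathbb{Z}^3$ such that the only lattice point of $P$ that is not a vertex is the origin, which lies strictly in the interior of $P$. A Fano polytope with vertex set $\{x_1,\ldots,x_k\}$ is minimal if for every $j$ the convex hull of $\{x_1,\ldots,x_k\}\setminus\{x_j\}$ is not a Fano polytope. *)

theory Defs
  imports "HOL-Analysis.Analysis"
begin

definition lattice_point :: "real^3 \<Rightarrow> bool" where
  "lattice_point x \<longleftrightarrow> (\<forall>i. x $ i \<in> \<int>)"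

definition vertices :: "(real^3) set \<Rightarrow> (real^3) set" where
  "vertices P = {v. v extreme_point_of P}"

definition fano_polytope :: "(real^3) set \<Rightarrow> bool" where
  "fano_polytope P \<longleftrightarrow> polytope P \<and> (\<forall>v \<in> vertices P. lattice_point v)
     \<and> 0 \<in> interior P
     \<and> {x \<in> P. lattice_point x} = vertices P \<union> {0}"

definition minimal_fano :: "(real^3) set \<Rightarrow> bool" where
  "minimal_fano P \<longleftrightarrow> fano_polytope P \<and>
     (\<forall>v \<in> vertices P. \<not> fano_polytope (convex hull (vertices P - {v})))"

definition octahedron :: "(real^3) set \<Rightarrow> bool" where
  "octahedron P \<longleftrightarrow> polytope P \<and>
     (\<exists>a1 a2 b1 b2 c1 c2. distinct [a1, a2, b1, b2, c1, c2] \<and>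
        vertices P = {a1, a2, b1, b2, c1, c2} \<and>
        {F. F facet_of P} =
          {convex hull {x, y, z} | x y z. x \<in> {a1, a2} \<and> y \<in> {b1, b2} \<and> z \<in> {c1, c2}})"

definition unimodular :: "real^3^3 \<Rightarrow> bool" where
  "unimodular A \<longleftrightarrow> (\<forall>i j. A $ i $ j \<in> \<int>) \<and> \<bar>det A\<bar> = 1"

end

theory Submission
  imports Defs
begin


lemma half_lemma:
  fixes a b c :: real
  assumes H: "\<And>(k::int) (n1::int) (n2::int) (n3::int). \<bar>k*a - n1\<bar> + \<bar>k*b - n2\<bar> + \<bar>k*c - n3\<bar> \<le> 1 \<Longrightarrow>
     (k*a - n1, k*b - n2, k*c - n3) \<in> {(0,0,0),(1,0,0),(-1,0,0),(0,1,0),(0,-1,0),(0,0,1),(0,0,-1)}"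
  shows "(a \<in> \<int> \<and> b \<in> \<int> \<and> c \<in> \<int>) \<or> (a - 1/2 \<in> \<int> \<and> b - 1/2 \<in> \<int> \<and> c - 1/2 \<in> \<int>)"
proof -
  define r1 where "r1 = a - round a"
  define r2 where "r2 = b - round b"
  define r3 where "r3 = c - round c"
  have b1: "\<bar>r1\<bar> \<le> 1/2" "\<bar>r2\<bar> \<le> 1/2" "\<bar>r3\<bar> \<le> 1/2"
    unfolding r1_def r2_def r3_def using of_int_round_abs_le by (metis abs_minus_commute)+
  show ?thesis
  proof (cases "\<bar>r1\<bar> + \<bar>r2\<bar> + \<bar>r3\<bar> \<le> 1")
    case True
    have "(r1, r2, r3) \<in> {(0,0,0),(1,0,0),(-1,0,0),(0,1,0),(0,-1,0),(0,0,1),(0,0,-1)}"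
      using H[of 1 "round a" "round b" "round c"] True unfolding r1_def r2_def r3_def by simp
    then have "r1 = 0 \<and> r2 = 0 \<and> r3 = 0" using b1 by auto
    then show ?thesis unfolding r1_def r2_def r3_def
      by (metis Ints_of_int eq_iff_diff_eq_0)
  next
    case False
    define m :: "real \<Rightarrow> int" where "m r = (if \<bar>r\<bar> \<le> 1/4 then 0 else if r > 0 then 1 else -1)" for r
    have fm: "\<bar>2*r - m r\<bar> = (if \<bar>r\<bar> \<le> 1/4 then 2*\<bar>r\<bar> else 1 - 2*\<bar>r\<bar>)" if "\<bar>r\<bar> \<le> 1/2" for r
      using that unfolding m_def by auto
    have le: "\<bar>2*r1 - m r1\<bar> + \<bar>2*r2 - m r2\<bar> + \<bar>2*r3 - m r3\<bar> \<le> 1"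
      unfolding fm[OF b1(1)] fm[OF b1(2)] fm[OF b1(3)] using False b1 by (auto split: if_splits)
    have e1: "real_of_int 2 * a - real_of_int (2*round a + m r1) = 2*r1 - m r1" unfolding r1_def by simp
    have e2: "real_of_int 2 * b - real_of_int (2*round b + m r2) = 2*r2 - m r2" unfolding r2_def by simp
    have e3: "real_of_int 2 * c - real_of_int (2*round c + m r3) = 2*r3 - m r3" unfolding r3_def by simp
    have mem: "(2*r1 - m r1, 2*r2 - m r2, 2*r3 - m r3) \<in> {(0,0,0),(1,0,0),(-1,0,0),(0,1,0),(0,-1,0),(0,0,1),(0,0,-1)}"
      by (rule H[of 2 "2*round a + m r1" "2*round b + m r2" "2*round c + m r3", unfolded e1 e2 e3, OF le])
    have hb: "\<bar>2*r - m r\<bar> \<le> 1/2" if "\<bar>r\<bar> \<le> 1/2" for r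
      using fm[OF that] that by auto
    have z: "2*r1 = m r1" "2*r2 = m r2" "2*r3 = m r3"
      using mem hb[OF b1(1)] hb[OF b1(2)] hb[OF b1(3)] by auto
    have "\<bar>r\<bar> = 1/2" if "2*r = m r" "\<bar>r\<bar> \<le> 1/2" "\<bar>r\<bar> \<noteq> 0" for r
      using that unfolding m_def by (auto split: if_splits)
    have hv: "r = 0 \<or> r = 1/2 \<or> r = -1/2" if "2*r = m r" for r
      using that unfolding m_def by (auto split: if_splits)
    have "\<bar>r1\<bar> = 1/2 \<and> \<bar>r2\<bar> = 1/2 \<and> \<bar>r3\<bar> = 1/2"
      using hv[OF z(1)] hv[OF z(2)] hv[OF z(3)] False by auto
    moreover have hr: "r - 1/2 \<in> \<int>" if "\<bar>r\<bar> = 1/2" for r :: real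
    proof (cases "r \<ge> 0")
      case True then have "r - 1/2 = 0" using that by (auto simp: abs_if)
      then show ?thesis by (metis Ints_0)
    next
      case False then have "r - 1/2 = -1" using that by (auto simp: abs_if)
      then show ?thesis by (metis Ints_1 Ints_minus)
    qed
    ultimately have "r1 - 1/2 \<in> \<int>" "r2 - 1/2 \<in> \<int>" "r3 - 1/2 \<in> \<int>" by auto
    moreover have "a - 1/2 = round a + (r1 - 1/2)" "b - 1/2 = round b + (r2 - 1/2)" "c - 1/2 = round c + (r3 - 1/2)"
      unfolding r1_def r2_def r3_def by simp_all
    ultimately show ?thesis by (metis Ints_add Ints_of_int)
  qed
qed



lemma lp_add: "lattice_point x \<Longrightarrow> lattice_point y \<Longrightarrow> lattice_point (x + y)"
  by (simp add: lattice_point_def Ints_add)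
lemma lp_diff: "lattice_point x \<Longrightarrow> lattice_point y \<Longrightarrow> lattice_point (x - y)"
  by (simp add: lattice_point_def Ints_diff)
lemma lp_uminus: "lattice_point x \<Longrightarrow> lattice_point (- x)"
  by (simp add: lattice_point_def Ints_minus)
lemma lp_uminus_iff: "lattice_point (- x) \<longleftrightarrow> lattice_point x"
  using lp_uminus by fastforce
lemma lp_smult: "lattice_point x \<Longrightarrow> lattice_point (real_of_int k *\<^sub>R x)"
  by (simp add: lattice_point_def Ints_mult)
lemma lp_zero: "lattice_point 0"
  by (simp add: lattice_point_def)
lemma lp_axis: "lattice_point (axis j 1)"
  by (simp add: lattice_point_def axis_def)

lemma det_Ints:
  fixes A :: "real^'n^'n"
  assumes "\<And>i j. A$i$j \<in> \<int>"
  shows "det A \<in> \<int>"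
  unfolding det_def
  by (intro Ints_sum Ints_mult Ints_prod assms) auto

lemma unimod_inv:
  fixes A B :: "real^'n^'n"
  assumes "\<And>i j. A$i$j \<in> \<int>" "\<And>i j. B$i$j \<in> \<int>" "A ** B = mat 1"
  shows "\<bar>det A\<bar> = 1"
proof -
  obtain p where p: "det A = of_int p" using det_Ints[OF assms(1)] Ints_cases by metis
  obtain q where q: "det B = of_int q" using det_Ints[OF assms(2)] Ints_cases by metis
  have "det A * det B = 1" using assms(3) det_mul det_I by metis
  then have "p * q = 1" using p q by (metis of_int_eq_1_iff of_int_mult)
  then show ?thesis using p zmult_eq_1_iff by auto
qed

definition cols3 :: "real^3 \<Rightarrow> real^3 \<Rightarrow> real^3 \<Rightarrow> real^3^3" where
  "cols3 u v w = (\<chi> i j. if j = 1 then u$i else if j = 2 then v$i else w$i)"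
definition rows3 :: "real^3 \<Rightarrow> real^3 \<Rightarrow> real^3 \<Rightarrow> real^3^3" where
  "rows3 p q r = (\<chi> i. if i = 1 then p else if i = 2 then q else r)"

lemma cols3_mult: "cols3 u v w *v x = x$1 *\<^sub>R u + x$2 *\<^sub>R v + x$3 *\<^sub>R w"
  by (simp add: cols3_def matrix_vector_mult_def vec_eq_iff sum_3 algebra_simps)

lemma cols3_vec: "cols3 u v w *v vector [a,b,c] = a *\<^sub>R u + b *\<^sub>R v + c *\<^sub>R w"
  by (simp add: cols3_mult)

lemma rows3_mult: "rows3 p q r *v x = vector [p \<bullet> x, q \<bullet> x, r \<bullet> x]"
  by (simp add: rows3_def matrix_vector_mult_def vec_eq_iff forall_3 inner_vec_def mult.commute)

lemma rows3_entry: "rows3 p q r $ i $ j \<in> {p$j, q$j, r$j}"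
  by (simp add: rows3_def)

lemma cols3_entry: "cols3 u v w $ i $ j \<in> {u$i, v$i, w$i}"
  by (simp add: cols3_def)

lemma inv_from_mult:
  fixes A B :: "real^3^3"
  assumes "\<And>x. A *v (B *v x) = x"
  shows "A ** B = mat 1"
  using assms by (simp add: matrix_eq matrix_vector_mul_assoc[symmetric])



lemma half_int_sum: "a - 1/2 \<in> \<int> \<Longrightarrow> c - 1/2 \<in> \<int> \<Longrightarrow> (a::real) + c \<in> \<int>"
proof -
  assume "a - 1/2 \<in> \<int>" "c - 1/2 \<in> \<int>"
  then have "(a - 1/2) + (c - 1/2) + 1 \<in> \<int>" by (intro Ints_add) auto
  then show ?thesis by simp
qed

lemma half_int_double: "a - 1/2 \<in> \<int> \<Longrightarrow> 2 * (a::real) \<in> \<int>"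
proof -
  assume "a - 1/2 \<in> \<int>"
  then have "2 * (a - 1/2) + 1 \<in> \<int>" by (intro Ints_add Ints_mult) auto
  then show ?thesis by (simp add: algebra_simps)
qed

lemma lattice_class:
  fixes u v w eu ev ew :: "real^3"
  assumes lat: "lattice_point u" "lattice_point v" "lattice_point w"
  and dual: "eu \<bullet> u = 1" "eu \<bullet> v = 0" "eu \<bullet> w = 0" "ev \<bullet> u = 0" "ev \<bullet> v = 1" "ev \<bullet> w = 0"
            "ew \<bullet> u = 0" "ew \<bullet> v = 0" "ew \<bullet> w = 1"
  and decomp: "\<And>x. x = (eu \<bullet> x) *\<^sub>R u + (ev \<bullet> x) *\<^sub>R v + (ew \<bullet> x) *\<^sub>R w"
  and empty: "\<And>x. lattice_point x \<Longrightarrow> \<bar>eu \<bullet> x\<bar> + \<bar>ev \<bullet> x\<bar> + \<bar>ew \<bullet> x\<bar> \<le> 1 \<Longrightarrow> x \<in> {0,u,-u,v,-v,w,-w}"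
  shows "\<exists>A. unimodular A \<and>
    ((\<lambda>x. A *v x) ` {vector [1,0,0], vector [-1,0,0], vector [0,1,0],
                                   vector [0,-1,0], vector [0,0,1], vector [0,0,-1]} = {u,-u,v,-v,w,-w}
     \<or> (\<lambda>x. A *v x) ` {vector [1,0,0], vector [-1,0,0], vector [0,1,0],
                                   vector [0,-1,0], vector [1,1,2], vector [-1,-1,-2]} = {u,-u,v,-v,w,-w})"
proof -
  have coords: "(eu \<bullet> x \<in> \<int> \<and> ev \<bullet> x \<in> \<int> \<and> ew \<bullet> x \<in> \<int>) \<or>
     (eu \<bullet> x - 1/2 \<in> \<int> \<and> ev \<bullet> x - 1/2 \<in> \<int> \<and> ew \<bullet> x - 1/2 \<in> \<int>)" if lx: "lattice_point x" for x
  proof (rule half_lemma)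
    fix k n1 n2 n3 :: int
    assume le: "\<bar>k * (eu \<bullet> x) - n1\<bar> + \<bar>k * (ev \<bullet> x) - n2\<bar> + \<bar>k * (ew \<bullet> x) - n3\<bar> \<le> 1"
    define z where "z = of_int k *\<^sub>R x - of_int n1 *\<^sub>R u - of_int n2 *\<^sub>R v - of_int n3 *\<^sub>R w"
    have lz: "lattice_point z" unfolding z_def
      by (intro lp_diff lp_smult lx lat)
    have cz: "eu \<bullet> z = k * (eu \<bullet> x) - n1" "ev \<bullet> z = k * (ev \<bullet> x) - n2" "ew \<bullet> z = k * (ew \<bullet> x) - n3"
      unfolding z_def by (simp_all add: inner_diff_right dual)
    have "\<bar>eu \<bullet> z\<bar> + \<bar>ev \<bullet> z\<bar> + \<bar>ew \<bullet> z\<bar> \<le> 1" using le by (simp only: cz)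
    then have "z \<in> {0,u,-u,v,-v,w,-w}" by (rule empty[OF lz])
    then have "(eu \<bullet> z, ev \<bullet> z, ew \<bullet> z) \<in> {(0,0,0),(1,0,0),(-1,0,0),(0,1,0),(0,-1,0),(0,0,1),(0,0,-1)}"
      by (elim insertE emptyE) (simp_all add: dual)
    then show "(k * (eu \<bullet> x) - n1, k * (ev \<bullet> x) - n2, k * (ew \<bullet> x) - n3)
       \<in> {(0,0,0),(1,0,0),(-1,0,0),(0,1,0),(0,-1,0),(0,0,1),(0,0,-1)}" using cz by simp
  qed
  have axc: "e \<bullet> axis j 1 = e $ j" for e :: "real^3" and j
    by (simp add: inner_axis)
  have imgs: "(\<lambda>x. A *v x) ` {a1,a2,a3,a4,a5,a6} = {A *v a1, A *v a2, A *v a3, A *v a4, A *v a5, A *v a6}"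
    for A :: "real^3^3" and a1 a2 a3 a4 a5 a6 by simp
  show ?thesis
  proof (cases "\<forall>x. lattice_point x \<longrightarrow> eu \<bullet> x \<in> \<int> \<and> ev \<bullet> x \<in> \<int> \<and> ew \<bullet> x \<in> \<int>")
    case True
    define A where "A = cols3 u v w"
    define B where "B = rows3 eu ev ew"
    have Aint: "A$i$j \<in> \<int>" for i j
      using cols3_entry[of u v w i j] lat unfolding A_def lattice_point_def by auto
    have Bint: "B$i$j \<in> \<int>" for i j
      using rows3_entry[of eu ev ew i j] True[rule_format, OF lp_axis[of j]] unfolding B_def axc by auto
    have "A ** B = mat 1"
      by (rule inv_from_mult) (metis A_def B_def cols3_mult rows3_mult vector_3 decomp)
    then have "unimodular A" unfolding unimodular_def using Aint Bint unimod_inv by blast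
    moreover have "(\<lambda>x. A *v x) ` {vector [1,0,0], vector [-1,0,0], vector [0,1,0],
                                   vector [0,-1,0], vector [0,0,1], vector [0,0,-1]} = {u,-u,v,-v,w,-w}"
      unfolding imgs A_def cols3_vec by simp
    ultimately show ?thesis by blast
  next
    case False
    then obtain x0 where lx0: "lattice_point x0" and nint: "\<not> (eu \<bullet> x0 \<in> \<int> \<and> ev \<bullet> x0 \<in> \<int> \<and> ew \<bullet> x0 \<in> \<int>)"
      by blast
    then have h: "eu \<bullet> x0 - 1/2 \<in> \<int>" "ev \<bullet> x0 - 1/2 \<in> \<int>" "ew \<bullet> x0 - 1/2 \<in> \<int>"
      using coords by blast+
    obtain p where p: "eu \<bullet> x0 - 1/2 = of_int p" using h(1) Ints_cases by metis
    obtain q where q: "ev \<bullet> x0 - 1/2 = of_int q" using h(2) Ints_cases by metis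
    obtain r where r: "ew \<bullet> x0 - 1/2 = of_int r" using h(3) Ints_cases by metis
    define y where "y = (1/2) *\<^sub>R (w - u - v)"
    have "y = x0 - of_int (p+1) *\<^sub>R u - of_int (q+1) *\<^sub>R v - of_int r *\<^sub>R w"
    proof -
      have "x0 = (of_int p + 1/2) *\<^sub>R u + (of_int q + 1/2) *\<^sub>R v + (of_int r + 1/2) *\<^sub>R w"
        using decomp[of x0] p q r by (metis add_diff_cancel_right' diff_add_cancel)
      then have ex: "\<And>i. x0$i = (of_int p + 1/2) * u$i + (of_int q + 1/2) * v$i + (of_int r + 1/2) * w$i" by simp
      show ?thesis unfolding y_def vec_eq_iff by (simp add: ex field_simps)
    qed
    then have ly: "lattice_point y" by (metis lp_diff lp_smult lx0 lat)
    define A where "A = cols3 u v y"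
    define B where "B = rows3 (eu + ew) (ev + ew) (2 *\<^sub>R ew)"
    have Aint: "A$i$j \<in> \<int>" for i j
      using cols3_entry[of u v y i j] lat ly unfolding A_def lattice_point_def by auto
    have Bint: "B$i$j \<in> \<int>" for i j
    proof -
      have "(eu + ew) $ j \<in> \<int> \<and> (ev + ew) $ j \<in> \<int> \<and> (2 *\<^sub>R ew) $ j \<in> \<int>"
        using coords[OF lp_axis[of j]] unfolding axc
        by (auto intro: half_int_sum half_int_double Ints_add Ints_mult)
      then show ?thesis using rows3_entry[of "eu + ew" "ev + ew" "2 *\<^sub>R ew" i j] unfolding B_def by auto
    qed
    have "A *v (B *v x) = x" for x
    proof -
      have "A *v (B *v x) = ((eu + ew) \<bullet> x) *\<^sub>R u + ((ev + ew) \<bullet> x) *\<^sub>R v + ((2 *\<^sub>R ew) \<bullet> x) *\<^sub>R y"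
        unfolding A_def B_def cols3_mult rows3_mult by simp
      also have "\<dots> = (eu \<bullet> x) *\<^sub>R u + (ev \<bullet> x) *\<^sub>R v + (ew \<bullet> x) *\<^sub>R w"
        unfolding y_def by (simp add: algebra_simps inner_add_left)
      also have "\<dots> = x" using decomp[of x] by simp
      finally show ?thesis .
    qed
    then have "A ** B = mat 1" by (rule inv_from_mult)
    then have "unimodular A" unfolding unimodular_def using Aint Bint unimod_inv by blast
    moreover have "(\<lambda>x. A *v x) ` {vector [1,0,0], vector [-1,0,0], vector [0,1,0],
                                   vector [0,-1,0], vector [1,1,2], vector [-1,-1,-2]} = {u,-u,v,-v,w,-w}"
    proof -
      have "A *v vector [1,1,2] = w" "A *v vector [-1,-1,-2] = -w"
        unfolding A_def cols3_vec y_def by (simp_all add: algebra_simps)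
      then show ?thesis unfolding imgs by (simp add: A_def cols3_vec)
    qed
    ultimately show ?thesis by blast
  qed
qed



lemma span3_coords:
  fixes a b c x :: "real^3"
  assumes "span {a,b,c} = UNIV"
  obtains s t r where "x = s *\<^sub>R a + t *\<^sub>R b + r *\<^sub>R c"
proof -
  have "x \<in> span {a,b,c}" using assms by simp
  then obtain k1 where k1: "x - k1 *\<^sub>R a \<in> span {b,c}" by (auto simp: span_insert)
  then obtain k2 where k2: "x - k1 *\<^sub>R a - k2 *\<^sub>R b \<in> span {c}" by (auto simp: span_insert)
  then obtain k3 where "x - k1 *\<^sub>R a - k2 *\<^sub>R b = k3 *\<^sub>R c" by (auto simp: span_singleton)
  then have "x = k1 *\<^sub>R a + k2 *\<^sub>R b + k3 *\<^sub>R c" by (simp add: algebra_simps)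
  then show ?thesis using that by blast
qed

lemma ortho_span_zero:
  fixes d :: "real^3"
  assumes "span S = UNIV" "\<And>s. s \<in> S \<Longrightarrow> d \<bullet> s = 0"
  shows "d = 0"
proof -
  have "d \<in> span S" using assms(1) by simp
  then have "orthogonal d d" by (rule orthogonal_to_span) (use assms(2) in \<open>simp add: orthogonal_def\<close>)
  then show ?thesis by (simp add: orthogonal_def)
qed

lemma sg1: "(x::real) = r * y \<Longrightarrow> x < 0 \<Longrightarrow> 0 \<le> y \<Longrightarrow> 0 < y"
  by (cases "y = 0") auto
lemma sg2: "(x::real) = r * y \<Longrightarrow> 0 \<le> x \<Longrightarrow> y < 0 \<Longrightarrow> r \<le> 0"
  by (metis mult_pos_neg not_le not_less)
lemma sg3: "(x::real) = r * y \<Longrightarrow> 0 \<le> x \<Longrightarrow> 0 < y \<Longrightarrow> 0 \<le> r"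
  by (metis mult_neg_pos not_le not_less)

lemma core:
  fixes a1 a2 b1 b2 c1 c2 :: "real^3"
  assumes dist: "distinct [a1,a2,b1,b2,c1,c2]"
  and fac: "\<And>x y z. x \<in> {a1,a2} \<Longrightarrow> y \<in> {b1,b2} \<Longrightarrow> z \<in> {c1,c2} \<Longrightarrow>
          (\<exists>h. h \<bullet> x = 1 \<and> h \<bullet> y = 1 \<and> h \<bullet> z = 1) \<and> span {x,y,z} = UNIV"
  and mini: "\<And>v. v \<in> {a1,a2,b1,b2,c1,c2} \<Longrightarrow>
          \<exists>d. d \<bullet> v < 0 \<and> (\<forall>w\<in>{a1,a2,b1,b2,c1,c2}-{v}. 0 \<le> d \<bullet> w)"
  and t: "t > 0" and co: "\<alpha> \<ge> 0" "\<beta> \<ge> 0" "\<gamma> \<ge> 0" "\<alpha> + \<beta> + \<gamma> = 1"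
  and rel: "-(t *\<^sub>R a1) = \<alpha> *\<^sub>R a2 + \<beta> *\<^sub>R b1 + \<gamma> *\<^sub>R c1"
  shows "\<beta> = 0 \<and> \<gamma> = 0"
proof -
  obtain db1 where db1: "db1 \<bullet> b1 < 0" "0 \<le> db1 \<bullet> a1" "0 \<le> db1 \<bullet> a2" "0 \<le> db1 \<bullet> b2" "0 \<le> db1 \<bullet> c1" "0 \<le> db1 \<bullet> c2"
    using mini[of b1] dist by auto
  obtain db2 where db2: "db2 \<bullet> b2 < 0" "0 \<le> db2 \<bullet> a1" "0 \<le> db2 \<bullet> a2" "0 \<le> db2 \<bullet> b1" "0 \<le> db2 \<bullet> c1" "0 \<le> db2 \<bullet> c2"
    using mini[of b2] dist by auto
  obtain dc1 where dc1: "dc1 \<bullet> c1 < 0" "0 \<le> dc1 \<bullet> a1" "0 \<le> dc1 \<bullet> a2" "0 \<le> dc1 \<bullet> b1" "0 \<le> dc1 \<bullet> b2" "0 \<le> dc1 \<bullet> c2"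
    using mini[of c1] dist by auto
  obtain dc2 where dc2: "dc2 \<bullet> c2 < 0" "0 \<le> dc2 \<bullet> a1" "0 \<le> dc2 \<bullet> a2" "0 \<le> dc2 \<bullet> b1" "0 \<le> dc2 \<bullet> b2" "0 \<le> dc2 \<bullet> c1"
    using mini[of c2] dist by auto
  have reld: "-(t * (d \<bullet> a1)) = \<alpha> * (d \<bullet> a2) + \<beta> * (d \<bullet> b1) + \<gamma> * (d \<bullet> c1)" for d
    using arg_cong[OF rel, of "\<lambda>v. d \<bullet> v"] by (simp add: inner_add_right)
  have sp: "span {a2,b1,c1} = UNIV" using fac by blast
  obtain s1 t1 r1 where b2e: "b2 = s1 *\<^sub>R a2 + t1 *\<^sub>R b1 + r1 *\<^sub>R c1" using span3_coords[OF sp] by metis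
  obtain s2 t2 r2 where c2e: "c2 = s2 *\<^sub>R a2 + t2 *\<^sub>R b1 + r2 *\<^sub>R c1" using span3_coords[OF sp] by metis
  have b2d: "d \<bullet> b2 = s1 * (d \<bullet> a2) + t1 * (d \<bullet> b1) + r1 * (d \<bullet> c1)" for d
    unfolding b2e by (simp add: inner_add_right)
  have c2d: "d \<bullet> c2 = s2 * (d \<bullet> a2) + t2 * (d \<bullet> b1) + r2 * (d \<bullet> c1)" for d
    unfolding c2e by (simp add: inner_add_right)
  have "\<alpha> > 0"
  proof (rule ccontr)
    assume "\<not> \<alpha> > 0"
    then have "\<alpha> = 0" using co by simp
    obtain h where h: "h \<bullet> a1 = 1" "h \<bullet> b1 = 1" "h \<bullet> c1 = 1" using fac[of a1 b1 c1] by auto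
    have "-(t * (h \<bullet> a1)) = \<alpha> * (h \<bullet> a2) + \<beta> * (h \<bullet> b1) + \<gamma> * (h \<bullet> c1)" by (rule reld)
    then show False using h \<open>\<alpha> = 0\<close> co t by simp
  qed
  show ?thesis
  proof (rule ccontr)
    assume nz: "\<not> (\<beta> = 0 \<and> \<gamma> = 0)"
    have zero3: "x = 0 \<and> y = 0 \<and> z = 0" if "-(t * w) = x + y + z" "0 \<le> w" "0 \<le> x" "0 \<le> y" "0 \<le> z" for w x y z :: real
      using that t by (smt (verit) mult_nonneg_nonneg)
    consider "\<beta> > 0" "\<gamma> > 0" | "\<beta> > 0" "\<gamma> = 0" | "\<beta> = 0" "\<gamma> > 0" using nz co by linarith
    then show False
    proof cases
      case 1
      have "\<alpha> * (db2 \<bullet> a2) = 0 \<and> \<beta> * (db2 \<bullet> b1) = 0 \<and> \<gamma> * (db2 \<bullet> c1) = 0"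
        using zero3[OF reld[of db2]] db2 co by simp
      then have "db2 \<bullet> a2 = 0" "db2 \<bullet> b1 = 0" "db2 \<bullet> c1 = 0" using 1 \<open>\<alpha> > 0\<close> by simp_all
      then have "db2 = 0" using ortho_span_zero[OF sp] by auto
      then show False using db2 by simp
    next
      case 2
      have van: "d \<bullet> a2 = 0 \<and> d \<bullet> b1 = 0" if "0 \<le> d \<bullet> a1" "0 \<le> d \<bullet> a2" "0 \<le> d \<bullet> b1" for d
      proof -
        have "\<alpha> * (d \<bullet> a2) = 0 \<and> \<beta> * (d \<bullet> b1) = 0"
          using zero3[OF reld[of d]] that co 2 by simp
        then show ?thesis using 2 \<open>\<alpha> > 0\<close> by simp
      qed
      have v1: "db2 \<bullet> a2 = 0" "db2 \<bullet> b1 = 0" using van db2 by auto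
      have v2: "dc1 \<bullet> a2 = 0" "dc1 \<bullet> b1 = 0" using van dc1 by auto
      have v3: "dc2 \<bullet> a2 = 0" "dc2 \<bullet> b1 = 0" using van dc2 by auto
      have e1: "db2 \<bullet> b2 = r1 * (db2 \<bullet> c1)" using b2d[of db2] v1 by simp
      have e2: "dc1 \<bullet> b2 = r1 * (dc1 \<bullet> c1)" using b2d[of dc1] v2 by simp
      have e3: "dc2 \<bullet> b2 = r1 * (dc2 \<bullet> c1)" using b2d[of dc2] v3 by simp
      have e4: "dc2 \<bullet> c2 = r2 * (dc2 \<bullet> c1)" using c2d[of dc2] v3 by simp
      have p1: "dc2 \<bullet> c1 > 0" using sg1[OF e4] dc2 by simp
      have "r1 \<le> 0" using sg2[OF e2] dc1 by simp
      moreover have "r1 \<ge> 0" using sg3[OF e3] dc2 p1 by simp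
      ultimately have "r1 = 0" by simp
      then show False using e1 db2 by simp
    next
      case 3
      have van: "d \<bullet> a2 = 0 \<and> d \<bullet> c1 = 0" if "0 \<le> d \<bullet> a1" "0 \<le> d \<bullet> a2" "0 \<le> d \<bullet> c1" for d
      proof -
        have "\<alpha> * (d \<bullet> a2) = 0 \<and> \<gamma> * (d \<bullet> c1) = 0"
          using zero3[OF reld[of d]] that co 3 by simp
        then show ?thesis using 3 \<open>\<alpha> > 0\<close> by simp
      qed
      have v1: "db1 \<bullet> a2 = 0" "db1 \<bullet> c1 = 0" using van db1 by auto
      have v2: "db2 \<bullet> a2 = 0" "db2 \<bullet> c1 = 0" using van db2 by auto
      have v3: "dc2 \<bullet> a2 = 0" "dc2 \<bullet> c1 = 0" using van dc2 by auto
      have e1: "db2 \<bullet> b2 = t1 * (db2 \<bullet> b1)" using b2d[of db2] v2 by simp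
      have e2: "db1 \<bullet> c2 = t2 * (db1 \<bullet> b1)" using c2d[of db1] v1 by simp
      have e3: "db2 \<bullet> c2 = t2 * (db2 \<bullet> b1)" using c2d[of db2] v2 by simp
      have e4: "dc2 \<bullet> c2 = t2 * (dc2 \<bullet> b1)" using c2d[of dc2] v3 by simp
      have p1: "db2 \<bullet> b1 > 0" using sg1[OF e1] db2 by simp
      have "t2 \<le> 0" using sg2[OF e2] db1 by simp
      moreover have "t2 \<ge> 0" using sg3[OF e3] db2 p1 by simp
      ultimately have "t2 = 0" by simp
      then show False using e4 dc2 by simp
    qed
  qed
qed



lemma antipode:
  fixes a1 a2 b1 b2 c1 c2 :: "real^3"
  assumes dist: "distinct [a1,a2,b1,b2,c1,c2]"
  and fac: "\<And>x y z. x \<in> {a1,a2} \<Longrightarrow> y \<in> {b1,b2} \<Longrightarrow> z \<in> {c1,c2} \<Longrightarrow>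
          (\<exists>h. h \<bullet> x = 1 \<and> h \<bullet> y = 1 \<and> h \<bullet> z = 1) \<and> span {x,y,z} = UNIV"
  and mini: "\<And>v. v \<in> {a1,a2,b1,b2,c1,c2} \<Longrightarrow>
          \<exists>d. d \<bullet> v < 0 \<and> (\<forall>w\<in>{a1,a2,b1,b2,c1,c2}-{v}. 0 \<le> d \<bullet> w)"
  and t: "t > 0" and xyz: "x \<in> {a1,a2}" "y \<in> {b1,b2}" "z \<in> {c1,c2}"
  and mem: "-(t *\<^sub>R a1) \<in> convex hull {x,y,z}"
  shows "a2 = -(t *\<^sub>R a1)"
proof -
  have "x \<noteq> a1"
  proof
    assume "x = a1"
    obtain h where h: "h \<bullet> x = 1" "h \<bullet> y = 1" "h \<bullet> z = 1" using fac[OF xyz] by blast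
    have "convex hull {x,y,z} \<subseteq> {p. h \<bullet> p = 1}"
      by (rule hull_minimal) (use h in \<open>auto simp: convex_hyperplane\<close>)
    then have "h \<bullet> (-(t *\<^sub>R a1)) = 1" using mem by blast
    then show False using h \<open>x = a1\<close> t by simp
  qed
  then have xa: "x = a2" using xyz by auto
  obtain \<alpha> \<beta> \<gamma> where co: "0 \<le> \<alpha>" "0 \<le> \<beta>" "0 \<le> \<gamma>" "\<alpha> + \<beta> + \<gamma> = 1"
    and rel: "-(t *\<^sub>R a1) = \<alpha> *\<^sub>R a2 + \<beta> *\<^sub>R y + \<gamma> *\<^sub>R z"
    using mem unfolding xa convex_hull_3 by blast
  define y' where "y' = (if y = b1 then b2 else b1)"
  define z' where "z' = (if z = c1 then c2 else c1)"
  have setB: "{y,y'} = {b1,b2}" and setC: "{z,z'} = {c1,c2}"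
    using xyz dist unfolding y'_def z'_def by auto
  have dist': "distinct [a1,a2,y,y',z,z']"
    using xyz dist unfolding y'_def z'_def by auto
  have V': "{a1,a2,y,y',z,z'} = {a1,a2,b1,b2,c1,c2}"
    using setB setC by (metis insert_commute insert_is_Un sup_assoc)
  have fac': "\<And>x y0 z0. x \<in> {a1,a2} \<Longrightarrow> y0 \<in> {y,y'} \<Longrightarrow> z0 \<in> {z,z'} \<Longrightarrow>
          (\<exists>h. h \<bullet> x = 1 \<and> h \<bullet> y0 = 1 \<and> h \<bullet> z0 = 1) \<and> span {x,y0,z0} = UNIV"
    using fac unfolding setB setC by blast
  have mini': "\<And>v. v \<in> {a1,a2,y,y',z,z'} \<Longrightarrow>
          \<exists>d. d \<bullet> v < 0 \<and> (\<forall>w\<in>{a1,a2,y,y',z,z'}-{v}. 0 \<le> d \<bullet> w)"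
    using mini unfolding V' by blast
  have "\<beta> = 0 \<and> \<gamma> = 0" by (rule core[OF dist' fac' mini' t co rel])
  then show ?thesis using rel co by simp
qed

lemma cross_mem:
  fixes P :: "(real^3) set"
  assumes cv: "convex P" and z: "0 \<in> P" and pts: "u \<in> P" "-u \<in> P" "v \<in> P" "-v \<in> P" "w \<in> P" "-w \<in> P"
  and le: "\<bar>a\<bar> + \<bar>b\<bar> + \<bar>c\<bar> \<le> 1"
  shows "a *\<^sub>R u + b *\<^sub>R v + c *\<^sub>R w \<in> P"
proof (cases "\<bar>a\<bar> + \<bar>b\<bar> + \<bar>c\<bar> = 0")
  case True
  then have "a = 0" "b = 0" "c = 0" by (auto simp: abs_if split: if_split_asm)
  then show ?thesis using z by simp
next
  case False
  define S where "S = \<bar>a\<bar> + \<bar>b\<bar> + \<bar>c\<bar>"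
  have S: "0 < S" "S \<le> 1" using False le unfolding S_def by auto
  define pu where "pu = (if a \<ge> 0 then u else -u)"
  define pv where "pv = (if b \<ge> 0 then v else -v)"
  define pw where "pw = (if c \<ge> 0 then w else -w)"
  have pP: "pu \<in> P" "pv \<in> P" "pw \<in> P" unfolding pu_def pv_def pw_def using pts by auto
  have e: "a *\<^sub>R u = \<bar>a\<bar> *\<^sub>R pu" "b *\<^sub>R v = \<bar>b\<bar> *\<^sub>R pv" "c *\<^sub>R w = \<bar>c\<bar> *\<^sub>R pw"
    unfolding pu_def pv_def pw_def by auto
  define y where "y = (\<bar>a\<bar>/S) *\<^sub>R pu + (\<bar>b\<bar>/S) *\<^sub>R pv + (\<bar>c\<bar>/S) *\<^sub>R pw"
  have "y \<in> convex hull {pu,pv,pw}"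
    unfolding convex_hull_3 y_def using S unfolding S_def
    by (rule_tac CollectI, rule_tac x="\<bar>a\<bar>/S" in exI, rule_tac x="\<bar>b\<bar>/S" in exI, rule_tac x="\<bar>c\<bar>/S" in exI)
       (auto simp: add_divide_distrib[symmetric] S_def)
  moreover have "convex hull {pu,pv,pw} \<subseteq> P" using pP cv by (simp add: hull_minimal)
  ultimately have yP: "y \<in> P" by blast
  have "a *\<^sub>R u + b *\<^sub>R v + c *\<^sub>R w = S *\<^sub>R y + (1 - S) *\<^sub>R 0"
    unfolding e y_def using S by (simp add: scaleR_add_right)
  also have "\<dots> \<in> P" using convexD[OF cv yP z, of S "1 - S"] S by simp
  finally show ?thesis .
qed



lemma facet_facts:
  fixes P :: "(real^3) set"
  assumes poly: "polytope P" and int0: "0 \<in> interior P" and F: "convex hull {x,y,z} facet_of P"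
  shows "(\<exists>h. h \<bullet> x = 1 \<and> h \<bullet> y = 1 \<and> h \<bullet> z = 1) \<and> span {x,y,z} = UNIV"
proof -
  obtain a b where a: "a \<noteq> 0" "P \<subseteq> {p. a \<bullet> p \<le> b}" "convex hull {x,y,z} = P \<inter> {p. a \<bullet> p = b}"
    using facet_of_polyhedron[OF polytope_imp_polyhedron[OF poly] F] by metis
  obtain e where e: "e > 0" "ball 0 e \<subseteq> P" using int0 mem_interior by blast
  define pt where "pt = (e / 2 / norm a) *\<^sub>R a"
  have "norm pt = e/2" unfolding pt_def using a(1) e(1) by simp
  then have "pt \<in> P" using e by (auto simp: subset_iff)
  then have "a \<bullet> pt \<le> b" using a(2) by blast
  moreover have "a \<bullet> pt = e / 2 * norm a"
    unfolding pt_def using a(1) by (simp add: power2_norm_eq_inner[symmetric] power2_eq_square)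
  moreover have "e / 2 * norm a > 0" using a(1) e(1) by simp
  ultimately have b: "b > 0" by linarith
  define h where "h = (1/b) *\<^sub>R a"
  have inF: "x \<in> convex hull {x,y,z}" "y \<in> convex hull {x,y,z}" "z \<in> convex hull {x,y,z}"
    by (simp_all add: hull_inc)
  have hx: "h \<bullet> x = 1" "h \<bullet> y = 1" "h \<bullet> z = 1"
    using inF a(3) b unfolding h_def by auto
  have affP: "aff_dim P = 3" using aff_dim_nonempty_interior[of P] int0 by auto
  have "aff_dim (convex hull {x,y,z}) = 2"
    using F affP unfolding facet_of_def by simp
  then have aff3: "aff_dim {x,y,z} = 2" by (simp add: aff_dim_convex_hull)
  have "affine hull {x,y,z} \<subseteq> {p. h \<bullet> p = 1}"
    by (rule hull_minimal) (use hx in \<open>auto simp: affine_hyperplane\<close>)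
  then have "0 \<notin> affine hull {x,y,z}" by auto
  then have "aff_dim (insert 0 {x,y,z}) = 3" using aff3 by (simp add: aff_dim_insert)
  moreover have "aff_dim (insert 0 {x,y,z}) = int (dim (insert 0 {x,y,z}))"
    using aff_dim_eq_dim[of 0 "insert 0 {x,y,z}"] by (simp add: hull_inc)
  ultimately have "dim (insert 0 {x,y,z}) = DIM(real^3)" by simp
  then have "span (insert 0 {x,y,z}) = UNIV" by (simp only: dim_eq_full)
  then have "span {x,y,z} = UNIV" by simp
  then show ?thesis using hx by blast
qed

lemma frontier_facet:
  fixes P :: "(real^3) set"
  assumes poly: "polytope P" and int0: "0 \<in> interior P" and v: "v \<noteq> 0"
  shows "\<exists>t>0. \<exists>F. F facet_of P \<and> -(t *\<^sub>R v) \<in> F"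
proof -
  obtain R where R: "R > 0" "\<And>p. p \<in> P \<Longrightarrow> norm p \<le> R"
    using polytope_imp_bounded[OF poly] bounded_pos by metis
  define q where "q = - ((R + 1) / norm v) *\<^sub>R v"
  have nq: "norm q = R + 1" unfolding q_def using v R by simp
  then have qP: "q \<notin> P" using R by force
  have cP: "closed P" by (simp add: poly polytope_imp_closed)
  have P0: "0 \<in> P" using int0 interior_subset by blast
  have "closed_segment 0 q \<inter> frontier P \<noteq> {}"
    by (rule connected_Int_frontier) (use qP P0 in auto)
  then obtain p where p1: "p \<in> closed_segment 0 q" and p2: "p \<in> frontier P" by blast
  have pP: "p \<in> P" "p \<notin> interior P" using p2 cP by (auto simp: frontier_def)
  then have "p \<noteq> 0" using int0 by auto
  obtain u where u: "0 \<le> u" "u \<le> 1" "p = u *\<^sub>R q" using p1 by (auto simp: in_segment)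
  then have "u \<noteq> 0" using \<open>p \<noteq> 0\<close> by auto
  then have upos: "u > 0" using u by simp
  define t where "t = u * ((R + 1) / norm v)"
  have tpos: "t > 0" unfolding t_def using upos R v by simp
  have pt: "p = -(t *\<^sub>R v)" unfolding u(3) q_def t_def by simp
  have "interior P \<noteq> {}" using int0 by auto
  then have "p \<in> P - rel_interior P" using pP rel_interior_nonempty_interior by auto
  then have "p \<in> \<Union> {F. F facet_of P}"
    using rel_boundary_of_polyhedron[OF polytope_imp_polyhedron[OF poly]] by simp
  then show ?thesis using tpos pt by blast
qed



lemma mini_d:
  fixes P :: "(real^3) set"
  assumes mf: "minimal_fano P" and vV: "v \<in> vertices P" and PV: "P = convex hull (vertices P)"
    and fin: "finite (vertices P)"
  shows "\<exists>d. d \<bullet> v < 0 \<and> (\<forall>w\<in>vertices P - {v}. 0 \<le> d \<bullet> w)"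
proof -
  have fp: "fano_polytope P" and nf: "\<not> fano_polytope (convex hull (vertices P - {v}))"
    using mf vV unfolding minimal_fano_def by auto
  from fp have poly: "polytope P" and latv: "\<forall>w\<in>vertices P. lattice_point w"
    and int0: "0 \<in> interior P" and latP: "{x \<in> P. lattice_point x} = vertices P \<union> {0}"
    unfolding fano_polytope_def by auto
  define S where "S = convex hull (vertices P - {v})"
  have SP: "S \<subseteq> P" unfolding S_def by (subst PV) (rule hull_mono, auto)
  have ext: "w extreme_point_of P" if "w \<in> vertices P" for w using that by (simp add: vertices_def)
  have ext_sub: "w extreme_point_of S" if "w extreme_point_of P" "w \<in> S" for w
    using that SP unfolding extreme_point_of_def by blast
  have vS: "v \<notin> S"
  proof
    assume "v \<in> S" then have "v extreme_point_of S" using ext[OF vV] ext_sub by blast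
    then have "v \<in> vertices P - {v}" unfolding S_def by (rule extreme_point_of_convex_hull)
    then show False by simp
  qed
  have vertS: "vertices S = vertices P - {v}"
  proof
    show "vertices S \<subseteq> vertices P - {v}" unfolding vertices_def S_def using extreme_point_of_convex_hull by blast
    show "vertices P - {v} \<subseteq> vertices S"
    proof
      fix w assume w: "w \<in> vertices P - {v}"
      then have "w \<in> S" unfolding S_def by (simp add: hull_inc)
      then show "w \<in> vertices S" using ext_sub ext w unfolding vertices_def by blast
    qed
  qed
  have n0: "0 \<notin> interior S"
  proof
    assume i0: "0 \<in> interior S"
    have "fano_polytope S" unfolding fano_polytope_def
    proof (intro conjI)
      show "polytope S" unfolding S_def polytope_def using fin by blast
      show "\<forall>w\<in>vertices S. lattice_point w" using vertS latv by blast
      show "0 \<in> interior S" by (rule i0)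
      show "{x \<in> S. lattice_point x} = vertices S \<union> {0}"
      proof
        show "{x \<in> S. lattice_point x} \<subseteq> vertices S \<union> {0}"
          using latP SP vS vertS by blast
        have "vertices S \<subseteq> S" unfolding vertices_def extreme_point_of_def by blast
        moreover have "0 \<in> S" using i0 interior_subset by blast
        ultimately show "vertices S \<union> {0} \<subseteq> {x \<in> S. lattice_point x}"
          using vertS latv lp_zero by blast
      qed
    qed
    then show False using nf S_def by simp
  qed
  have cS: "convex S" "compact S" unfolding S_def using fin
    by (auto intro: convex_convex_hull finite_imp_compact_convex_hull)
  obtain d where d: "d \<noteq> 0" "\<forall>y\<in>S. 0 \<le> d \<bullet> y"
  proof (cases "0 \<in> S")
    case False
    then show ?thesis using separating_hyperplane_set_0[OF cS(1) False] that by blast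
  next
    case True
    show ?thesis
    proof (cases "0 \<in> rel_interior S")
      case True
      have "aff_dim S \<noteq> int DIM(real^3)"
        using interior_rel_interior_gen[of S] True n0 by auto
      then have "aff_dim S < 3" using aff_dim_le_DIM[of S] by simp
      moreover have "aff_dim S = int (dim S)"
        using aff_dim_eq_dim[of 0 S] \<open>0 \<in> S\<close> by (simp add: hull_inc)
      ultimately have "dim S < DIM(real^3)" by simp
      then obtain a where a: "a \<noteq> 0" "span S \<subseteq> {x. a \<bullet> x = 0}"
        using lowdim_subset_hyperplane by blast
      have "\<forall>y\<in>S. 0 \<le> a \<bullet> y"
      proof
        fix y assume "y \<in> S"
        then have "y \<in> span S" by (rule span_base)
        then have "a \<bullet> y = 0" using a(2) by blast
        then show "0 \<le> a \<bullet> y" by simp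
      qed
      then show ?thesis using that a(1) by blast
    next
      case False
      have cl: "closure S = S" using cS by (simp add: compact_imp_closed)
      have c0: "0 \<in> closure S" using \<open>0 \<in> S\<close> cl by simp
      obtain a where a: "a \<noteq> 0" "\<And>y. y \<in> closure S \<Longrightarrow> a \<bullet> 0 \<le> a \<bullet> y"
          "\<And>y. y \<in> rel_interior S \<Longrightarrow> a \<bullet> 0 < a \<bullet> y"
        by (rule supporting_hyperplane_relative_frontier[OF cS(1) c0 False]) blast
      have "\<forall>y\<in>S. 0 \<le> a \<bullet> y" using a(2) cl by simp
      then show ?thesis by (rule that[OF a(1)])
    qed
  qed
  have wS: "w \<in> S" if "w \<in> vertices P - {v}" for w using that unfolding S_def by (simp add: hull_inc)
  have "d \<bullet> v < 0"
  proof (rule ccontr)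
    assume "\<not> d \<bullet> v < 0"
    have "\<forall>w\<in>vertices P. 0 \<le> d \<bullet> w"
    proof
      fix w assume w: "w \<in> vertices P"
      show "0 \<le> d \<bullet> w"
      proof (cases "w = v")
        case True then show ?thesis using \<open>\<not> d \<bullet> v < 0\<close> by simp
      next
        case False then show ?thesis using d(2) wS w by blast
      qed
    qed
    then have Ph: "P \<subseteq> {p. 0 \<le> d \<bullet> p}"
      by (subst PV, intro hull_minimal) (auto simp: convex_halfspace_ge)
    obtain e where e: "e > 0" "ball 0 e \<subseteq> P" using int0 mem_interior by blast
    define pt where "pt = - (e / 2 / norm d) *\<^sub>R d"
    have "norm pt = e/2" unfolding pt_def using d(1) e(1) by simp
    then have "pt \<in> P" using e by (auto simp: subset_iff)
    then have "0 \<le> d \<bullet> pt" using Ph by blast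
    moreover have "d \<bullet> pt = - (e / 2 * norm d)"
      unfolding pt_def using d(1) by (simp add: power2_norm_eq_inner[symmetric] power2_eq_square)
    moreover have "e / 2 * norm d > 0" using d(1) e(1) by simp
    ultimately show False by linarith
  qed
  then show ?thesis using d(2) wS by blast
qed



lemma pair_antipodal:
  fixes P :: "(real^3) set" and a1 a2 b1 b2 c1 c2 :: "real^3"
  assumes poly: "polytope P" and int0: "0 \<in> interior P"
  and dist: "distinct [a1,a2,b1,b2,c1,c2]"
  and fac: "\<And>x y z. x \<in> {a1,a2} \<Longrightarrow> y \<in> {b1,b2} \<Longrightarrow> z \<in> {c1,c2} \<Longrightarrow>
          (\<exists>h. h \<bullet> x = 1 \<and> h \<bullet> y = 1 \<and> h \<bullet> z = 1) \<and> span {x,y,z} = UNIV"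
  and mini: "\<And>v. v \<in> {a1,a2,b1,b2,c1,c2} \<Longrightarrow>
          \<exists>d. d \<bullet> v < 0 \<and> (\<forall>w\<in>{a1,a2,b1,b2,c1,c2}-{v}. 0 \<le> d \<bullet> w)"
  and ns: "\<And>u s. u \<in> {a1,a2,b1,b2,c1,c2} \<Longrightarrow> 0 < s \<Longrightarrow> s < 1 \<Longrightarrow> -(s *\<^sub>R u) \<notin> {a1,a2,b1,b2,c1,c2}"
  and FP: "\<And>F. F facet_of P \<Longrightarrow> \<exists>x y z. x \<in> {a1,a2} \<and> y \<in> {b1,b2} \<and> z \<in> {c1,c2} \<and> F = convex hull {x,y,z}"
  and nz: "a1 \<noteq> 0"
  shows "a2 = - a1"
proof -
  obtain t F where t: "t > 0" "F facet_of P" "-(t *\<^sub>R a1) \<in> F"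
    using frontier_facet[OF poly int0 nz] by blast
  obtain x y z where xyz: "x \<in> {a1,a2}" "y \<in> {b1,b2}" "z \<in> {c1,c2}" "F = convex hull {x,y,z}"
    using FP[OF t(2)] by blast
  have a2: "a2 = -(t *\<^sub>R a1)"
    by (rule antipode[OF dist fac mini t(1) xyz(1-3)]) (use t xyz in auto)
  have "t = 1"
  proof (rule ccontr)
    assume "t \<noteq> 1"
    then consider "t < 1" | "t > 1" by linarith
    then show False
    proof cases
      case 1
      then show False using ns[of a1 t] t a2 by auto
    next
      case 2
      have "a1 = -((1/t) *\<^sub>R a2)" using a2 t by simp
      then show False using ns[of a2 "1/t"] t 2 by auto
    qed
  qed
  then show ?thesis using a2 by simp
qed

theorem lemma4p3:
  fixes P :: "(real^3) set"
  assumes "minimal_fano P" and "octahedron P"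
  shows "\<exists>A. unimodular A \<and>
    (P = (\<lambda>x. A *v x) ` (convex hull {vector [1,0,0], vector [-1,0,0], vector [0,1,0],
                                   vector [0,-1,0], vector [0,0,1], vector [0,0,-1]})
     \<or> P = (\<lambda>x. A *v x) ` (convex hull {vector [1,0,0], vector [-1,0,0], vector [0,1,0],
                                   vector [0,-1,0], vector [1,1,2], vector [-1,-1,-2]}))"
proof -
  have fp: "fano_polytope P" using assms(1) unfolding minimal_fano_def by auto
  from fp have poly: "polytope P" and latv: "\<forall>w\<in>vertices P. lattice_point w"
    and int0: "0 \<in> interior P" and latP: "{x \<in> P. lattice_point x} = vertices P \<union> {0}"
    unfolding fano_polytope_def by auto
  from assms(2) have "\<exists>a1 a2 b1 b2 c1 c2. distinct [a1, a2, b1, b2, c1, c2] \<and>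
        vertices P = {a1, a2, b1, b2, c1, c2} \<and>
        {F. F facet_of P} =
          {convex hull {x, y, z} | x y z. x \<in> {a1, a2} \<and> y \<in> {b1, b2} \<and> z \<in> {c1, c2}}"
    unfolding octahedron_def by (rule conjunct2)
  then obtain a1 a2 b1 b2 c1 c2 where ALL: "distinct [a1, a2, b1, b2, c1, c2] \<and>
        vertices P = {a1, a2, b1, b2, c1, c2} \<and>
        {F. F facet_of P} =
          {convex hull {x, y, z} | x y z. x \<in> {a1, a2} \<and> y \<in> {b1, b2} \<and> z \<in> {c1, c2}}"
    by (elim exE)
  have dist: "distinct [a1, a2, b1, b2, c1, c2]" using ALL by (rule conjunct1)
  have VP: "vertices P = {a1, a2, b1, b2, c1, c2}" using ALL[THEN conjunct2] by (rule conjunct1)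
  have FP: "{F. F facet_of P} =
          {convex hull {x, y, z} | x y z. x \<in> {a1, a2} \<and> y \<in> {b1, b2} \<and> z \<in> {c1, c2}}"
    using ALL[THEN conjunct2] by (rule conjunct2)
  have cc: "compact P" "convex P" using poly by (auto simp: polytope_imp_compact polytope_imp_convex)
  have PV: "P = convex hull (vertices P)"
    using Krein_Milman_Minkowski[OF cc] unfolding vertices_def by simp
  have fin: "finite (vertices P)" using VP by simp
  have facet: "convex hull {x,y,z} facet_of P" if "x\<in>{a1,a2}" "y\<in>{b1,b2}" "z\<in>{c1,c2}" for x y z
  proof -
    have "convex hull {x,y,z} \<in> {F. F facet_of P}" unfolding FP using that by blast
    then show ?thesis by simp
  qed
  have FP': "\<exists>x y z. x \<in> {a1,a2} \<and> y \<in> {b1,b2} \<and> z \<in> {c1,c2} \<and> F = convex hull {x,y,z}"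
    if "F facet_of P" for F
  proof -
    have "F \<in> {F. F facet_of P}" using that by simp
    then show ?thesis unfolding FP by blast
  qed
  define V where "V = {a1, a2, b1, b2, c1, c2}"
  have fac: "(\<exists>h. h \<bullet> x = 1 \<and> h \<bullet> y = 1 \<and> h \<bullet> z = 1) \<and> span {x,y,z} = UNIV"
    if "x\<in>{a1,a2}" "y\<in>{b1,b2}" "z\<in>{c1,c2}" for x y z
    using facet_facts[OF poly int0 facet[OF that]] .
  have mini: "\<exists>d. d \<bullet> v < 0 \<and> (\<forall>w\<in>V-{v}. 0 \<le> d \<bullet> w)" if "v \<in> V" for v
    using mini_d[OF assms(1) _ PV fin, of v] that VP unfolding V_def by simp
  have nz: "v \<noteq> 0" if "v \<in> V" for v
  proof -
    have "\<exists>h. h \<bullet> v = 1"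
      using that fac[of v b1 c1] fac[of a1 v c1] fac[of a1 b1 v] unfolding V_def by blast
    then show ?thesis by auto
  qed
  have P0: "0 \<in> P" using int0 interior_subset by blast
  have "vertices P \<subseteq> P" unfolding vertices_def extreme_point_of_def by blast
  then have VsubP: "V \<subseteq> P" using VP unfolding V_def by simp
  have ns: "-(s *\<^sub>R u) \<notin> V" if u: "u \<in> V" and s: "0 < s" "s < 1" for u s
  proof
    assume m: "-(s *\<^sub>R u) \<in> V"
    then have "lattice_point (-(s *\<^sub>R u))" using latv VP unfolding V_def by blast
    then have l: "lattice_point (s *\<^sub>R u)" by (simp add: lp_uminus_iff)
    have "(1 - s) *\<^sub>R 0 + s *\<^sub>R u \<in> P" using convexD[OF cc(2) P0, of u "1 - s" s] u VsubP s by auto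
    then have "s *\<^sub>R u \<in> P" by simp
    then have "s *\<^sub>R u \<in> vertices P \<union> {0}" using latP l by blast
    moreover have "s *\<^sub>R u \<noteq> 0" using nz[OF u] s by simp
    ultimately have "s *\<^sub>R u extreme_point_of P" unfolding vertices_def by simp
    moreover have "s *\<^sub>R u \<in> open_segment 0 u"
      using nz[OF u] s by (auto simp: in_segment)
    ultimately show False using P0 u VsubP unfolding extreme_point_of_def by blast
  qed
  have a: "a2 = - a1"
    by (rule pair_antipodal[OF poly int0 dist fac mini[unfolded V_def] ns[unfolded V_def] FP' nz])
       (auto simp: V_def)
  have b: "b2 = - b1"
  proof (rule pair_antipodal[OF poly int0, of b1 b2 a1 a2 c1 c2])
    show "distinct [b1, b2, a1, a2, c1, c2]" using dist by auto
    show "(\<exists>h. h \<bullet> x = 1 \<and> h \<bullet> y = 1 \<and> h \<bullet> z = 1) \<and> span {x, y, z} = UNIV"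
      if hyp: "x \<in> {b1, b2}" "y \<in> {a1, a2}" "z \<in> {c1, c2}" for x y z
    proof -
      obtain h where h: "h \<bullet> y = 1" "h \<bullet> x = 1" "h \<bullet> z = 1" and sp: "span {y,x,z} = UNIV"
        using fac[OF hyp(2,1,3)] by blast
      have eq: "{x,y,z} = {y,x,z}" by blast
      show ?thesis unfolding eq using h sp by blast
    qed
    have VV: "{b1, b2, a1, a2, c1, c2} = V" unfolding V_def by auto
    show "\<exists>d. d \<bullet> v < 0 \<and> (\<forall>w\<in>{b1, b2, a1, a2, c1, c2} - {v}. 0 \<le> d \<bullet> w)"
      if "v \<in> {b1, b2, a1, a2, c1, c2}" for v using mini that unfolding VV by blast
    show "-(s *\<^sub>R u) \<notin> {b1, b2, a1, a2, c1, c2}"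
      if "u \<in> {b1, b2, a1, a2, c1, c2}" "0 < s" "s < 1" for u s using ns that unfolding VV by blast
    show "\<exists>x y z. x \<in> {b1, b2} \<and> y \<in> {a1, a2} \<and> z \<in> {c1, c2} \<and> F = convex hull {x, y, z}"
      if hyp: "F facet_of P" for F
    proof -
      obtain x y z where xyz: "x \<in> {a1,a2}" "y \<in> {b1,b2}" "z \<in> {c1,c2}" "F = convex hull {x,y,z}"
        using FP'[OF hyp] by blast
      have eq: "{x,y,z} = {y,x,z}" by blast
      show ?thesis using xyz unfolding eq by blast
    qed
    show "b1 \<noteq> 0" using nz unfolding V_def by blast
  qed
  have c: "c2 = - c1"
  proof (rule pair_antipodal[OF poly int0, of c1 c2 a1 a2 b1 b2])
    show "distinct [c1, c2, a1, a2, b1, b2]" using dist by auto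
    show "(\<exists>h. h \<bullet> x = 1 \<and> h \<bullet> y = 1 \<and> h \<bullet> z = 1) \<and> span {x, y, z} = UNIV"
      if hyp: "x \<in> {c1, c2}" "y \<in> {a1, a2}" "z \<in> {b1, b2}" for x y z
    proof -
      obtain h where h: "h \<bullet> y = 1" "h \<bullet> z = 1" "h \<bullet> x = 1" and sp: "span {y,z,x} = UNIV"
        using fac[OF hyp(2,3,1)] by blast
      have eq: "{x,y,z} = {y,z,x}" by blast
      show ?thesis unfolding eq using h sp by blast
    qed
    have VV: "{c1, c2, a1, a2, b1, b2} = V" unfolding V_def by auto
    show "\<exists>d. d \<bullet> v < 0 \<and> (\<forall>w\<in>{c1, c2, a1, a2, b1, b2} - {v}. 0 \<le> d \<bullet> w)"
      if "v \<in> {c1, c2, a1, a2, b1, b2}" for v using mini that unfolding VV by blast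
    show "-(s *\<^sub>R u) \<notin> {c1, c2, a1, a2, b1, b2}"
      if "u \<in> {c1, c2, a1, a2, b1, b2}" "0 < s" "s < 1" for u s using ns that unfolding VV by blast
    show "\<exists>x y z. x \<in> {c1, c2} \<and> y \<in> {a1, a2} \<and> z \<in> {b1, b2} \<and> F = convex hull {x, y, z}"
      if hyp: "F facet_of P" for F
    proof -
      obtain x y z where xyz: "x \<in> {a1,a2}" "y \<in> {b1,b2}" "z \<in> {c1,c2}" "F = convex hull {x,y,z}"
        using FP'[OF hyp] by blast
      have eq: "{x,y,z} = {z,x,y}" by blast
      show ?thesis using xyz unfolding eq by blast
    qed
    show "c1 \<noteq> 0" using nz unfolding V_def by blast
  qed
  obtain h1 where h1: "h1 \<bullet> a1 = 1" "h1 \<bullet> b1 = 1" "h1 \<bullet> c1 = 1" using fac[of a1 b1 c1] by auto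
  obtain h2 where h2: "h2 \<bullet> a1 = 1" "h2 \<bullet> b1 = -1" "h2 \<bullet> c1 = -1" using fac[of a1 b2 c2] b c by auto
  obtain h3 where h3: "h3 \<bullet> a1 = -1" "h3 \<bullet> b1 = 1" "h3 \<bullet> c1 = -1" using fac[of a2 b1 c2] a c by auto
  obtain h4 where h4: "h4 \<bullet> a1 = -1" "h4 \<bullet> b1 = -1" "h4 \<bullet> c1 = 1" using fac[of a2 b2 c1] a b by auto
  define eu where "eu = (1/2) *\<^sub>R (h1 + h2)"
  define ev where "ev = (1/2) *\<^sub>R (h1 + h3)"
  define ew where "ew = (1/2) *\<^sub>R (h1 + h4)"
  have dual: "eu \<bullet> a1 = 1" "eu \<bullet> b1 = 0" "eu \<bullet> c1 = 0" "ev \<bullet> a1 = 0" "ev \<bullet> b1 = 1" "ev \<bullet> c1 = 0"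
            "ew \<bullet> a1 = 0" "ew \<bullet> b1 = 0" "ew \<bullet> c1 = 1"
    unfolding eu_def ev_def ew_def using h1 h2 h3 h4 by (simp_all add: inner_add_left)
  have sp: "span {a1, b1, c1} = UNIV" using fac[of a1 b1 c1] by auto
  have decomp: "x = (eu \<bullet> x) *\<^sub>R a1 + (ev \<bullet> x) *\<^sub>R b1 + (ew \<bullet> x) *\<^sub>R c1" for x
  proof -
    obtain s t r where x: "x = s *\<^sub>R a1 + t *\<^sub>R b1 + r *\<^sub>R c1" using span3_coords[OF sp] by metis
    have "eu \<bullet> x = s" "ev \<bullet> x = t" "ew \<bullet> x = r" unfolding x by (simp_all add: inner_add_right dual)
    then show ?thesis using x by simp
  qed
  have Veq: "vertices P = {a1, -a1, b1, -b1, c1, -c1}" using VP a b c by simp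
  have pts: "a1 \<in> P" "-a1 \<in> P" "b1 \<in> P" "-b1 \<in> P" "c1 \<in> P" "-c1 \<in> P"
    using VsubP a b c unfolding V_def by auto
  have empty: "x \<in> {0, a1, -a1, b1, -b1, c1, -c1}"
    if lx: "lattice_point x" and le: "\<bar>eu \<bullet> x\<bar> + \<bar>ev \<bullet> x\<bar> + \<bar>ew \<bullet> x\<bar> \<le> 1" for x
  proof -
    have "(eu \<bullet> x) *\<^sub>R a1 + (ev \<bullet> x) *\<^sub>R b1 + (ew \<bullet> x) *\<^sub>R c1 \<in> P"
      by (rule cross_mem[OF cc(2) P0 pts le])
    then have "x \<in> P" using decomp[of x] by simp
    then have "x \<in> vertices P \<union> {0}" using latP lx by blast
    then show ?thesis unfolding Veq by blast
  qed
  have lat: "lattice_point a1" "lattice_point b1" "lattice_point c1" using latv VP by auto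
  obtain A where A: "unimodular A"
    and img: "(\<lambda>x. A *v x) ` {vector [1,0,0], vector [-1,0,0], vector [0,1,0],
                                   vector [0,-1,0], vector [0,0,1], vector [0,0,-1]} = {a1,-a1,b1,-b1,c1,-c1}
     \<or> (\<lambda>x. A *v x) ` {vector [1,0,0], vector [-1,0,0], vector [0,1,0],
                                   vector [0,-1,0], vector [1,1,2], vector [-1,-1,-2]} = {a1,-a1,b1,-b1,c1,-c1}"
    using lattice_class[OF lat dual decomp empty] by blast
  have lin: "linear (\<lambda>x. A *v x)" by simp
  have PC: "P = convex hull {a1,-a1,b1,-b1,c1,-c1}" unfolding Veq[symmetric] by (rule PV)
  have L: "\<And>S. (\<lambda>x. A *v x) ` (convex hull S) = convex hull ((\<lambda>x. A *v x) ` S)"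
    by (rule convex_hull_linear_image[OF lin])
  from img show ?thesis
  proof
    assume i: "(\<lambda>x. A *v x) ` {vector [1,0,0], vector [-1,0,0], vector [0,1,0],
                                   vector [0,-1,0], vector [0,0,1], vector [0,0,-1]} = {a1,-a1,b1,-b1,c1,-c1}"
    have "P = (\<lambda>x. A *v x) ` (convex hull {vector [1,0,0], vector [-1,0,0], vector [0,1,0],
                                   vector [0,-1,0], vector [0,0,1], vector [0,0,-1]})"
      by (simp only: L i PC)
    then show ?thesis using A by blast
  next
    assume i: "(\<lambda>x. A *v x) ` {vector [1,0,0], vector [-1,0,0], vector [0,1,0],
                                   vector [0,-1,0], vector [1,1,2], vector [-1,-1,-2]} = {a1,-a1,b1,-b1,c1,-c1}"
    have "P = (\<lambda>x. A *v x) ` (convex hull {vector [1,0,0], vector [-1,0,0], vector [0,1,0],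
                                   vector [0,-1,0], vector [1,1,2], vector [-1,-1,-2]})"
      by (simp only: L i PC)
    then show ?thesis using A by blast
  qed
qed

end
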